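(* Let $G$ be a graph on $N\ge 21$ vertices with edges $e_1,\dots,e_m$, and for $0\le k\le m$ let $G_k$ be the graph on the same vertex set with edge set $\{e_1,\dots,e_k\}$. Fix $k$ with $0\le k\le m-1$, set $S=\mathcal I(G_k)$, $H=\mathcal I(G_{k+1})$ and $n=2N^2$. Let $A_1,\dots,A_n\in S$ be initial states (with an arbitrary joint distribution), and for each $i\in[n]$ run the BIDC Markov chain on $G_k$ from $A_i$ for $n$ steps, with fresh random choices independent across steps, chains, and of the initial states, producing states $X_{i0}=A_i,X_{i1},\dots,X_{in}$. Let $X$ be the $n\times n$ matrix whose $i$-th row is $(X_{i1},\dots,X_{in})$. Then the probability $p(X)$ that $X$ has no $H$-PM satisfies $p(X)\le e^{-N}$.
   Context: $\mathcal I(F)$ is the family of independent sets (including $\emptyset$) of a graph $F$. The Basic Insert/Delete Chain (BIDC) on a graph $F=(V,E)$ has state space $\mathcal I(F)$; from state $X_t$ it draws a vertex $u\in V$ uniformly at random and sets $X_{t+1}=X_t\setminus\{u\}$ if $u\in X_t$, $X_{t+1}=X_t\cup\{u\}$ if $u\notin X_t$ and $X_t\cup\{u\}\in\mathcal I(F)$, and $X_{t+1}=X_t$ otherwise. A perfect matching (PM) of an $n\times n$ matrix is $M=((i_1,1),\dots,(i_n,n))$ with $\{i_1,\dots,i_n\}=[n]$; an $H$-PM is a PM with $X_{i_j,j}\in H$ for all $j$. *)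

theory Defs
  imports "HOL-Probability.Probability"
begin

text \<open>Graphs: vertex set V (finite), edge set E of 2-element subsets of V.
  Independent sets of the graph (V, E), including the empty set.\<close>
definition indep_sets :: "'a set \<Rightarrow> 'a set set \<Rightarrow> 'a set set" where
  "indep_sets V E = {X. X \<subseteq> V \<and> (\<forall>e\<in>E. \<not> e \<subseteq> X)}"

definition bidc_step :: "'a set \<Rightarrow> 'a set set \<Rightarrow> 'a set \<Rightarrow> 'a set pmf" where
  "bidc_step V E X = map_pmf
     (\<lambda>u. if u \<in> X then X - {u}
          else if insert u X \<in> indep_sets V E then insert u X else X)
     (pmf_of_set V)"

text \<open>Run the chain for t steps from X0; result is the list [X_1, ..., X_t].\<close>
fun bidc_run :: "'a set \<Rightarrow> 'a set set \<Rightarrow> 'a set \<Rightarrow> nat \<Rightarrow> 'a set list pmf" where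
  "bidc_run V E X 0 = return_pmf []"
| "bidc_run V E X (Suc t) =
     bind_pmf (bidc_step V E X) (\<lambda>Y. map_pmf (\<lambda>ys. Y # ys) (bidc_run V E Y t))"

text \<open>The random n x n matrix: initial states A drawn from init (arbitrary joint law),
  then independent chains for rows i = 1..n, each run for n steps;
  entry (i,j) (1 \<le> i,j \<le> n) is X_{ij}.\<close>
definition bidc_matrix :: "'a set \<Rightarrow> 'a set set \<Rightarrow> (nat \<Rightarrow> 'a set) pmf \<Rightarrow> nat
    \<Rightarrow> (nat \<Rightarrow> nat \<Rightarrow> 'a set) pmf" where
  "bidc_matrix V E init n = bind_pmf init (\<lambda>A.
     map_pmf (\<lambda>R i j. R i ! (j - 1)) (Pi_pmf {1..n} [] (\<lambda>i. bidc_run V E (A i) n)))"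

definition has_H_PM :: "'b set \<Rightarrow> nat \<Rightarrow> (nat \<Rightarrow> nat \<Rightarrow> 'b) \<Rightarrow> bool" where
  "has_H_PM H n X = (\<exists>\<sigma>. bij_betw \<sigma> {1..n} {1..n} \<and> (\<forall>j\<in>{1..n}. X (\<sigma> j) j \<in> H))"

end

theory Submission
  imports Defs
begin


lemma hall:
  assumes "finite I" "\<forall>i\<in>I. finite (A i)" "\<forall>K\<subseteq>I. card K \<le> card (\<Union>(A ` K))"
  shows "\<exists>f. inj_on f I \<and> (\<forall>i\<in>I. f i \<in> A i)"
  using assms
proof (induction "card I" arbitrary: I A rule: less_induct)
  case less
  note fin = less.prems(1) and finA = less.prems(2) and H = less.prems(3)
  show ?case
  proof (cases "I = {}")
    case True then show ?thesis by auto
  next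
    case False
    show ?thesis
    proof (cases "\<exists>K. K \<subseteq> I \<and> K \<noteq> {} \<and> K \<noteq> I \<and> card (\<Union>(A ` K)) = card K")
      case False
      from \<open>I \<noteq> {}\<close> obtain i0 where i0: "i0 \<in> I" by auto
      have "card {i0} \<le> card (\<Union>(A ` {i0}))" using H i0 by auto
      then have "A i0 \<noteq> {}" by auto
      then obtain x where x: "x \<in> A i0" by auto
      define I' where "I' = I - {i0}"
      define A' where "A' = (\<lambda>i. A i - {x})"
      have lt: "card I' < card I" unfolding I'_def using i0 fin by (metis card_Diff1_less)
      have "\<exists>f. inj_on f I' \<and> (\<forall>i\<in>I'. f i \<in> A' i)"
      proof (rule less.hyps[OF lt])
        show "finite I'" using fin I'_def by auto
        show "\<forall>i\<in>I'. finite (A' i)" using finA I'_def A'_def by auto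
        show "\<forall>K\<subseteq>I'. card K \<le> card (\<Union>(A' ` K))"
        proof (intro allI impI)
          fix K assume K: "K \<subseteq> I'"
          show "card K \<le> card (\<Union>(A' ` K))"
          proof (cases "K = {}")
            case True then show ?thesis by simp
          next
            case Kne: False
            have KI: "K \<subseteq> I" "K \<noteq> I" using K i0 I'_def by auto
            have finU: "finite (\<Union>(A ` K))" using KI fin finA by (meson finite_UN_I finite_subset subsetD)
            have "card K \<le> card (\<Union>(A ` K))" using H KI by auto
            moreover have "card (\<Union>(A ` K)) \<noteq> card K" using False KI Kne by auto
            ultimately have "card K + 1 \<le> card (\<Union>(A ` K))" by auto
            moreover have "\<Union>(A' ` K) = \<Union>(A ` K) - {x}" unfolding A'_def by auto
            moreover have "card (\<Union>(A ` K) - {x}) \<ge> card (\<Union>(A ` K)) - 1"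
              using finU by (simp add: card_Diff_singleton_if)
            ultimately show ?thesis by (metis add_le_imp_le_diff le_trans)
          qed
        qed
      qed
      then obtain f where f: "inj_on f I'" "\<forall>i\<in>I'. f i \<in> A' i" by blast
      define g where "g = f(i0 := x)"
      have "inj_on g I"
      proof (rule inj_onI)
        fix a b assume ab: "a \<in> I" "b \<in> I" "g a = g b"
        show "a = b"
        proof (cases "a = i0"; cases "b = i0")
          assume "a = i0" "b \<noteq> i0" then show ?thesis using ab f(2) I'_def A'_def g_def by force
        next
          assume "a \<noteq> i0" "b = i0" then show ?thesis using ab f(2) I'_def A'_def g_def by force
        next
          assume "a \<noteq> i0" "b \<noteq> i0" then show ?thesis using ab f(1) I'_def g_def by (auto dest: inj_onD)
        qed simp
      qed
      moreover have "\<forall>i\<in>I. g i \<in> A i" using f(2) x I'_def A'_def g_def by auto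
      ultimately show ?thesis by blast
    next
      case True
      then obtain K where K: "K \<subseteq> I" "K \<noteq> {}" "K \<noteq> I" "card (\<Union>(A ` K)) = card K" by blast
      define U where "U = \<Union>(A ` K)"
      have finK: "finite K" using K fin finite_subset by auto
      have finU: "finite U" using K fin finA U_def by (meson finite_UN_I finite_subset subsetD)
      have lt1: "card K < card I" using K fin by (simp add: psubset_card_mono)
      have "\<exists>f. inj_on f K \<and> (\<forall>i\<in>K. f i \<in> A i)"
        by (rule less.hyps[OF lt1]) (use finK finA H K in auto)
      then obtain f1 where f1: "inj_on f1 K" "\<forall>i\<in>K. f1 i \<in> A i" by blast
      define I2 where "I2 = I - K"
      define A2 where "A2 = (\<lambda>i. A i - U)"
      have lt2: "card I2 < card I" unfolding I2_def
        by (intro psubset_card_mono) (use K fin in auto)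
      have "\<exists>f. inj_on f I2 \<and> (\<forall>i\<in>I2. f i \<in> A2 i)"
      proof (rule less.hyps[OF lt2])
        show "finite I2" using fin I2_def by auto
        show "\<forall>i\<in>I2. finite (A2 i)" using finA I2_def A2_def by auto
        show "\<forall>L\<subseteq>I2. card L \<le> card (\<Union>(A2 ` L))"
        proof (intro allI impI)
          fix L assume L: "L \<subseteq> I2"
          have LK: "L \<union> K \<subseteq> I" "L \<inter> K = {}" using L K I2_def by auto
          have finL: "finite L" using L fin I2_def finite_subset by auto
          have finLK: "finite (\<Union>(A ` (L \<union> K)))" using LK fin finA by (meson finite_UN_I finite_subset subsetD)
          have eq: "\<Union>(A2 ` L) = \<Union>(A ` (L \<union> K)) - U" unfolding A2_def U_def by auto
          have sub: "U \<subseteq> \<Union>(A ` (L \<union> K))" unfolding U_def by auto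
          have "card (\<Union>(A2 ` L)) = card (\<Union>(A ` (L \<union> K))) - card U"
            using eq sub finLK by (simp add: card_Diff_subset finite_subset)
          moreover have "card (L \<union> K) \<le> card (\<Union>(A ` (L \<union> K)))" using H LK(1) by blast
          moreover have "card (L \<union> K) = card L + card K" using LK finL finK by (simp add: card_Un_disjoint)
          moreover have "card U = card K" using K U_def by simp
          ultimately show "card L \<le> card (\<Union>(A2 ` L))" by linarith
        qed
      qed
      then obtain f2 where f2: "inj_on f2 I2" "\<forall>i\<in>I2. f2 i \<in> A2 i" by blast
      define g where "g = (\<lambda>i. if i \<in> K then f1 i else f2 i)"
      have "inj_on g I"
      proof (rule inj_onI)
        fix a b assume ab: "a \<in> I" "b \<in> I" "g a = g b"
        have f1U: "\<forall>i\<in>K. f1 i \<in> U" using f1(2) U_def by auto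
        have f2U: "\<forall>i\<in>I2. f2 i \<notin> U" using f2(2) A2_def by auto
        show "a = b"
        proof (cases "a \<in> K"; cases "b \<in> K")
          assume "a \<in> K" "b \<in> K" then show ?thesis using ab f1(1) g_def by (auto dest: inj_onD)
        next
          assume "a \<notin> K" "b \<notin> K" then show ?thesis using ab f2(1) g_def I2_def by (auto dest: inj_onD)
        next
          assume "a \<in> K" "b \<notin> K"
          then have "g a \<in> U" "g b \<notin> U" using f1U f2U ab g_def I2_def by auto
          then show ?thesis using ab by simp
        next
          assume a: "a \<notin> K" and b: "b \<in> K"
          have "f2 a \<notin> U" using f2U ab(1) a I2_def by blast
          moreover have "f1 b \<in> U" using f1U b by blast
          ultimately show ?thesis using ab(3) a b g_def by simp
        qed
      qed
      moreover have "\<forall>i\<in>I. g i \<in> A i" using f1(2) f2(2) I2_def A2_def g_def by auto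
      ultimately show ?thesis by blast
    qed
  qed
qed



lemma prob_bind_le2:
  fixes c :: real
  assumes "\<And>x. x \<in> set_pmf M \<Longrightarrow> measure_pmf.prob (f x) E \<le> (if x \<in> B then c else 0)"
    and "c \<ge> 0"
  shows "measure_pmf.prob (bind_pmf M f) E \<le> measure_pmf.prob M B * c"
proof -
  have "emeasure (measure_pmf (bind_pmf M f)) E = (\<integral>\<^sup>+x. emeasure (measure_pmf (f x)) E \<partial>measure_pmf M)"
    by simp
  also have "\<dots> \<le> (\<integral>\<^sup>+x. ennreal c * indicator B x \<partial>measure_pmf M)"
  proof (rule nn_integral_mono_AE)
    show "AE x in measure_pmf M. emeasure (measure_pmf (f x)) E \<le> ennreal c * indicator B x"
    proof (rule AE_pmfI)
      fix x assume x: "x \<in> set_pmf M"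
      have "emeasure (measure_pmf (f x)) E = ennreal (measure_pmf.prob (f x) E)"
        by (simp add: measure_pmf.emeasure_eq_measure)
      also have "\<dots> \<le> ennreal (if x \<in> B then c else 0)" using assms(1)[OF x] by (simp add: ennreal_leI)
      also have "\<dots> = ennreal c * indicator B x" by (simp add: indicator_def)
      finally show "emeasure (measure_pmf (f x)) E \<le> ennreal c * indicator B x" .
    qed
  qed
  also have "\<dots> = ennreal c * emeasure (measure_pmf M) B"
    by (simp add: nn_integral_cmult_indicator)
  also have "\<dots> = ennreal (measure_pmf.prob M B * c)"
    by (simp add: measure_pmf.emeasure_eq_measure assms(2) ennreal_mult' mult.commute)
  finally have "ennreal (measure_pmf.prob (bind_pmf M f) E) \<le> ennreal (measure_pmf.prob M B * c)"
    by (simp add: measure_pmf.emeasure_eq_measure)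
  then show ?thesis using assms(2) by (simp add: ennreal_le_iff)
qed

lemma prob_bind_le:
  fixes c :: real
  assumes "\<And>x. x \<in> set_pmf M \<Longrightarrow> measure_pmf.prob (f x) E \<le> c" "c \<ge> 0"
  shows "measure_pmf.prob (bind_pmf M f) E \<le> c"
  using prob_bind_le2[of M f E UNIV c] assms by simp

lemma step_set:
  assumes "finite V" "V \<noteq> {}" "X \<in> indep_sets V E" "Y \<in> set_pmf (bidc_step V E X)"
  shows "Y \<in> indep_sets V E"
  using assms unfolding bidc_step_def
  by (auto simp: indep_sets_def split: if_splits)

lemma run_set:
  assumes "finite V" "V \<noteq> {}" "X \<in> indep_sets V E" "ys \<in> set_pmf (bidc_run V E X t)"
  shows "length ys = t \<and> set ys \<subseteq> indep_sets V E"
  using assms(3,4)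
proof (induction t arbitrary: X ys)
  case 0 then show ?case by simp
next
  case (Suc t)
  then obtain Y zs where "Y \<in> set_pmf (bidc_step V E X)" "zs \<in> set_pmf (bidc_run V E Y t)" "ys = Y # zs"
    by auto
  moreover then have "Y \<in> indep_sets V E" using step_set assms(1,2) Suc.prems(1) by blast
  ultimately show ?case using Suc.IH by auto
qed

lemma step_bad:
  assumes "finite V" "card V \<ge> 3" "e \<subseteq> V" "card e = 2"
  shows "measure_pmf.prob (bidc_step V E X) {Y. e \<subseteq> Y} \<le> 1 - 2 / card V"
proof -
  define g where "g = (\<lambda>u. if u \<in> X then X - {u}
          else if insert u X \<in> indep_sets V E then insert u X else X)"
  have Vne: "V \<noteq> {}" using assms(2) by auto
  have gsub: "\<And>w. g w \<subseteq> insert w X" "\<And>w. w \<in> X \<Longrightarrow> w \<notin> g w" unfolding g_def by auto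
  have cardle: "card (V \<inter> g -` {Y. e \<subseteq> Y}) \<le> card V - 2"
  proof (cases "e \<subseteq> X")
    case True
    have "V \<inter> g -` {Y. e \<subseteq> Y} \<subseteq> V - e" using gsub True by blast
    then have "card (V \<inter> g -` {Y. e \<subseteq> Y}) \<le> card (V - e)" using assms(1) by (intro card_mono) auto
    also have "\<dots> = card V - 2" using assms by (simp add: card_Diff_subset finite_subset)
    finally show ?thesis .
  next
    case False
    then obtain c where c: "c \<in> e" "c \<notin> X" by auto
    have "V \<inter> g -` {Y. e \<subseteq> Y} \<subseteq> {c}" using gsub c by blast
    then have "card (V \<inter> g -` {Y. e \<subseteq> Y}) \<le> 1" by (metis card.empty card.insert empty_iff finite.intros(1) le_zero_eq subset_singletonD order_refl One_nat_def le_SucI)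
    then show ?thesis using assms(2) by linarith
  qed
  have "measure_pmf.prob (bidc_step V E X) {Y. e \<subseteq> Y} = card (V \<inter> g -` {Y. e \<subseteq> Y}) / card V"
    unfolding bidc_step_def g_def[symmetric] using assms(1) Vne by (simp add: measure_pmf_of_set)
  also have "\<dots> \<le> (card V - 2) / card V"
    using cardle assms(2) by (intro divide_right_mono) (auto simp: of_nat_diff)
  also have "\<dots> = 1 - 2 / card V" using assms(2) by (simp add: field_simps of_nat_diff)
  finally show ?thesis .
qed

lemma run_bad:
  assumes "finite V" "card V \<ge> 3" "e \<subseteq> V" "card e = 2"
  shows "C \<subseteq> {..<t} \<Longrightarrow> measure_pmf.prob (bidc_run V E X t) {ys. \<forall>j\<in>C. e \<subseteq> ys ! j}
           \<le> (1 - 2 / card V) ^ card C"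
proof (induction t arbitrary: X C)
  case 0 then show ?case by simp
next
  case (Suc t)
  define q :: real where "q = 1 - 2 / card V"
  have q0: "q \<ge> 0" using assms(2) by (simp add: q_def field_simps)
  define C' where "C' = (\<lambda>j. j - 1) ` (C - {0})"
  have C'sub: "C' \<subseteq> {..<t}" using Suc.prems by (auto simp: C'_def)
  have inj: "inj_on (\<lambda>j. j - 1) (C - {0})" by (auto simp: inj_on_def)
  have cC': "card C' = card (C - {0})" unfolding C'_def using inj by (simp add: card_image)
  have finC: "finite C" using Suc.prems finite_subset[of C "{..<Suc t}"] by simp
  have IH: "measure_pmf.prob (bidc_run V E Y t) {ys. \<forall>j\<in>C'. e \<subseteq> ys ! j} \<le> q ^ card C'" for Y
    using Suc.IH[OF C'sub] unfolding q_def .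
  have pre: "(\<lambda>ys. Y # ys) -` {ys. \<forall>j\<in>C. e \<subseteq> ys ! j} =
      (if 0 \<in> C \<and> \<not> e \<subseteq> Y then {} else {ys. \<forall>j\<in>C'. e \<subseteq> ys ! j})" for Y
  proof -
    have "(\<forall>j\<in>C. e \<subseteq> (Y # ys) ! j) \<longleftrightarrow> (0 \<in> C \<longrightarrow> e \<subseteq> Y) \<and> (\<forall>j\<in>C'. e \<subseteq> ys ! j)" for ys
    proof -
      have "(\<forall>j\<in>C. e \<subseteq> (Y # ys) ! j) \<longleftrightarrow> (0 \<in> C \<longrightarrow> e \<subseteq> Y) \<and> (\<forall>j\<in>C - {0}. e \<subseteq> ys ! (j - 1))"
      proof -
        have nc: "(Y#ys)!j = (if j=0 then Y else ys!(j-1))" for j by (simp add: nth_Cons')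
        show ?thesis unfolding nc by auto
      qed
      also have "(\<forall>j\<in>C - {0}. e \<subseteq> ys ! (j - 1)) \<longleftrightarrow> (\<forall>j\<in>C'. e \<subseteq> ys ! j)"
        unfolding C'_def by auto
      finally show ?thesis .
    qed
    then show ?thesis by auto
  qed
  have eq: "bidc_run V E X (Suc t) = bind_pmf (bidc_step V E X) (\<lambda>Y. map_pmf (\<lambda>ys. Y # ys) (bidc_run V E Y t))"
    by simp
  show ?case
  proof (cases "0 \<in> C")
    case True
    have "measure_pmf.prob (bidc_run V E X (Suc t)) {ys. \<forall>j\<in>C. e \<subseteq> ys ! j}
        \<le> measure_pmf.prob (bidc_step V E X) {Y. e \<subseteq> Y} * q ^ card C'"
      unfolding eq
    proof (rule prob_bind_le2)
      fix Y assume "Y \<in> set_pmf (bidc_step V E X)"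
      show "measure_pmf.prob (map_pmf ((#) Y) (bidc_run V E Y t)) {ys. \<forall>j\<in>C. e \<subseteq> ys ! j}
          \<le> (if Y \<in> {Y. e \<subseteq> Y} then q ^ card C' else 0)"
        using IH[of Y] True by (subst measure_map_pmf, subst pre) auto
    qed (use q0 in simp)
    also have "\<dots> \<le> q * q ^ card C'"
      by (rule mult_right_mono, use step_bad[OF assms, of E X] in \<open>simp add: q_def\<close>) (use q0 in simp)
    also have "\<dots> = q ^ card C"
    proof -
      have "card C = Suc (card (C - {0}))" by (rule card.remove[OF finC True])
      then have "card C = Suc (card C')" by (simp only: cC')
      then show ?thesis by (simp only: power_Suc)
    qed
    finally show ?thesis unfolding q_def .
  next
    case False
    have "measure_pmf.prob (bidc_run V E X (Suc t)) {ys. \<forall>j\<in>C. e \<subseteq> ys ! j} \<le> q ^ card C'"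
      unfolding eq
    proof (rule prob_bind_le)
      fix Y assume "Y \<in> set_pmf (bidc_step V E X)"
      show "measure_pmf.prob (map_pmf ((#) Y) (bidc_run V E Y t)) {ys. \<forall>j\<in>C. e \<subseteq> ys ! j} \<le> q ^ card C'"
        using IH[of Y] False by (subst measure_map_pmf, subst pre) auto
    qed (use q0 in simp)
    also have "card C' = card C" using cC' False by simp
    finally show ?thesis unfolding q_def .
  qed
qed



lemma exp1_ge: "exp (1::real) \<ge> 27/10"
proof -
  have "exp (1::real) > (1 + 1/100) powr 100" by (rule exp_1_gt_powr) simp
  also have "(1 + 1/100::real) powr 100 = (101/100) ^ 100" by (simp add: powr_realpow)
  moreover have "27/10 \<le> (101/100::real) ^ 100" by (simp add: power_divide)
  ultimately show ?thesis by linarith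
qed

lemma pow_ge: "N \<ge> 21 \<Longrightarrow> 8 * real N ^ 6 \<le> (27/10) ^ N"
proof (induction N rule: nat_induct_at_least)
  case base then show ?case by (simp add: power_divide)
next
  case (Suc N)
  have N: "real N \<ge> 21" using Suc by simp
  have "real (Suc N) ^ 6 = ((real N + 1) / real N) ^ 6 * real N ^ 6"
    using N by (simp add: power_divide add.commute)
  also have "\<dots> \<le> (22/21) ^ 6 * real N ^ 6"
    using N by (intro mult_right_mono power_mono) (auto simp: field_simps)
  also have "\<dots> \<le> 27/10 * real N ^ 6" by (intro mult_right_mono) (auto simp: power_divide)
  finally have "8 * real (Suc N) ^ 6 \<le> 27/10 * (8 * real N ^ 6)" by simp
  also have "\<dots> \<le> 27/10 * (27/10) ^ N" using Suc.IH by simp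
  finally show ?case by simp
qed

lemma exp_ge_poly: "N \<ge> 21 \<Longrightarrow> 8 * real N ^ 6 \<le> exp (real N)"
proof -
  assume "N \<ge> 21"
  then have "8 * real N ^ 6 \<le> (27/10) ^ N" by (rule pow_ge)
  also have "\<dots> \<le> exp 1 ^ N" using exp1_ge by (intro power_mono) auto
  also have "\<dots> = exp (real N)" by (simp add: exp_of_nat_mult[symmetric])
  finally show ?thesis .
qed



lemma term_bound:
  fixes N n c :: nat
  assumes N: "N \<ge> 21" and n: "n = 2*N^2" and c: "1 \<le> c" "c \<le> n"
  shows "real (n choose c) * real (n choose (n+1-c)) * (1 - 2/real N) ^ ((n+1-c)*c)
         \<le> real n ^ 2 * exp (-2 * real N)"
proof -
  define t where "t = n + 1 - c"
  define m where "m = min c t"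
  have ct: "c + t = n + 1" "t \<le> n" "1 \<le> t" using c by (auto simp: t_def)
  have m1: "m \<ge> 1" using c ct by (auto simp: m_def)
  have n1: "n \<ge> 1" using c by simp
  have b1: "n choose c \<le> n ^ m"
  proof (cases "c \<le> t")
    case True then show ?thesis using binomial_le_pow[OF c(2)] by (simp add: m_def)
  next
    case False
    have "n choose c = n choose (n - c)" using c(2) by (rule binomial_symmetric)
    also have "\<dots> \<le> n ^ (n - c)" by (rule binomial_le_pow) simp
    also have "\<dots> \<le> n ^ m" using False ct n1 by (intro power_increasing) (auto simp: m_def)
    finally show ?thesis .
  qed
  have b2: "n choose t \<le> n ^ m"
  proof (cases "t \<le> c")
    case True then show ?thesis using binomial_le_pow[OF ct(2)] by (simp add: m_def)
  next
    case False
    have "n choose t = n choose (n - t)" using ct(2) by (rule binomial_symmetric)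
    also have "\<dots> \<le> n ^ (n - t)" by (rule binomial_le_pow) simp
    also have "\<dots> \<le> n ^ m" using False ct n1 by (intro power_increasing) (auto simp: m_def)
    finally show ?thesis .
  qed
  have B: "real (n choose c) * real (n choose t) \<le> (real n ^ 2) ^ m"
  proof -
    have "real (n choose c) * real (n choose t) \<le> real (n ^ m) * real (n ^ m)"
      using b1 b2 by (intro mult_mono) auto
    then show ?thesis by (simp add: power_mult_distrib power2_eq_square)
  qed
  have Npos: "real N > 0" using N by simp
  define q :: real where "q = 1 - 2 / real N"
  have q0: "q \<ge> 0" using N by (simp add: q_def field_simps)
  have qe: "q \<le> exp (- 2 / real N)" unfolding q_def using exp_ge_add_one_self[of "-2/real N"] by simp
  have tc: "t * c \<ge> m * N^2"
  proof -
    have "max c t \<ge> N^2" using ct n by auto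
    moreover have "t * c = m * max c t" by (auto simp: m_def min_def max_def)
    ultimately show ?thesis by simp
  qed
  have "q ^ (t*c) \<le> exp (- 2 / real N) ^ (t*c)" using q0 qe by (intro power_mono) auto
  also have "\<dots> = exp (- 2 / real N * real (t*c))" by (simp add: exp_of_nat_mult[symmetric] mult.commute)
  also have "\<dots> \<le> exp (- 2 / real N * real (m * N^2))"
  proof -
    have "real (m * N^2) \<le> real (t*c)" using tc by linarith
    then show ?thesis using Npos by (intro exp_mono mult_left_mono_neg) auto
  qed
  also have "- 2 / real N * real (m * N^2) = real m * (-2 * real N)"
    using Npos by (simp add: field_simps power2_eq_square)
  also have "exp (real m * (-2 * real N)) = exp (-2 * real N) ^ m" by (simp add: exp_of_nat_mult[symmetric])
  finally have Q: "q ^ (t*c) \<le> exp (-2 * real N) ^ m" .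
  have "real (n choose c) * real (n choose t) * q ^ (t*c) \<le> (real n ^ 2) ^ m * exp (-2 * real N) ^ m"
    using B Q q0 by (intro mult_mono) auto
  also have "\<dots> = (real n ^ 2 * exp (-2 * real N)) ^ m" by (simp add: power_mult_distrib)
  also have "\<dots> \<le> (real n ^ 2 * exp (-2 * real N)) ^ 1"
  proof (rule power_decreasing[OF m1])
    show "0 \<le> real n ^ 2 * exp (-2 * real N)" by simp
    have "real n ^ 2 = 4 * real N ^ 4" using n by (simp add: power_mult_distrib flip: power_mult)
    also have "\<dots> \<le> 8 * real N ^ 6"
    proof -
      have "real N ^ 4 \<le> real N ^ 6" using N by (intro power_increasing) auto
      then show ?thesis using zero_le_power[of "real N" 6] by linarith
    qed
    also have "\<dots> \<le> exp (real N)" using exp_ge_poly[OF N] .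
    also have "\<dots> \<le> exp (2 * real N)" by simp
    finally have "real n ^ 2 \<le> exp (2 * real N)" .
    then have "real n ^ 2 * exp (-2 * real N) \<le> exp (2 * real N) * exp (-2 * real N)"
      by (intro mult_right_mono) auto
    also have "\<dots> = 1" by (simp add: exp_add[symmetric])
    finally show "real n ^ 2 * exp (-2 * real N) \<le> 1" .
  qed
  finally show ?thesis unfolding t_def q_def by simp
qed

lemma sum_bound:
  fixes N n :: nat
  assumes N: "N \<ge> 21" and n: "n = 2*N^2"
  shows "(\<Sum>c\<in>{1..n}. real (n choose c) * real (n choose (n+1-c)) * (1 - 2/real N) ^ ((n+1-c)*c))
         \<le> exp (- real N)"
proof -
  have "(\<Sum>c\<in>{1..n}. real (n choose c) * real (n choose (n+1-c)) * (1 - 2/real N) ^ ((n+1-c)*c))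
      \<le> (\<Sum>c\<in>{1..n}. real n ^ 2 * exp (-2 * real N))"
    by (intro sum_mono term_bound[OF N n]) auto
  also have "\<dots> = real n ^ 3 * exp (-2 * real N)" by (simp add: power3_eq_cube power2_eq_square)
  also have "real n ^ 3 = 8 * real N ^ 6" using n by (simp add: power_mult_distrib flip: power_mult)
  also have "8 * real N ^ 6 * exp (-2 * real N) \<le> exp (real N) * exp (-2 * real N)"
    using exp_ge_poly[OF N] by (intro mult_right_mono) auto
  also have "\<dots> = exp (- real N)" by (simp add: exp_add[symmetric])
  finally show ?thesis .
qed



lemma Ev_bound:
  fixes A :: "nat \<Rightarrow> 'a set"
  assumes "finite V" "card V \<ge> 3" "e \<subseteq> V" "card e = 2"
    and T: "T \<subseteq> {1..n}" and K: "K \<subseteq> {1..n}"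
  shows "measure_pmf.prob (Pi_pmf {1..n} [] (\<lambda>i. bidc_run V E (A i) n))
           {R. \<forall>i\<in>T. \<forall>j\<in>K. e \<subseteq> R i ! (j - 1)} \<le> (1 - 2 / card V) ^ (card T * card K)"
proof -
  define q :: real where "q = 1 - 2 / card V"
  have q0: "q \<ge> 0" using assms(2) by (simp add: q_def field_simps)
  define B where "B = {ys. \<forall>j\<in>K. e \<subseteq> ys ! (j - 1)}"
  define C where "C = (\<lambda>j. j - 1) ` K"
  have CB: "B = {ys. \<forall>j\<in>C. e \<subseteq> ys ! j}" unfolding B_def C_def by auto
  have Csub: "C \<subseteq> {..<n}" unfolding C_def using K by (force simp: subset_iff)
  have cardC: "card C = card K" unfolding C_def
  proof (rule card_image, rule inj_onI)
    fix x y assume "x \<in> K" "y \<in> K" "x - 1 = y - 1"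
    moreover have "x \<ge> 1" "y \<ge> 1" using K \<open>x \<in> K\<close> \<open>y \<in> K\<close> by auto
    ultimately show "x = y" by simp
  qed
  have Bb: "measure_pmf.prob (bidc_run V E X n) B \<le> q ^ card K" for X
    using run_bad[OF assms(1-4) Csub, of E X] unfolding CB q_def cardC .
  have eq: "{R. \<forall>i\<in>T. \<forall>j\<in>K. e \<subseteq> R i ! (j - 1)} = Pi {1..n} (\<lambda>i. if i \<in> T then B else UNIV)"
    using T unfolding B_def Pi_def by (auto simp: subset_iff)
  have "measure_pmf.prob (Pi_pmf {1..n} [] (\<lambda>i. bidc_run V E (A i) n))
           {R. \<forall>i\<in>T. \<forall>j\<in>K. e \<subseteq> R i ! (j - 1)}
      = (\<Prod>i\<in>{1..n}. measure_pmf.prob (bidc_run V E (A i) n) (if i \<in> T then B else UNIV))"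
    unfolding eq by (rule measure_Pi_pmf_Pi) simp
  also have "\<dots> \<le> (\<Prod>i\<in>{1..n}. (if i \<in> T then q ^ card K else 1))"
    by (intro prod_mono) (auto simp: Bb)
  also have "\<dots> = (q ^ card K) ^ card T"
    using T by (simp add: prod.If_cases Int_absorb1)
  finally show ?thesis unfolding q_def by (simp add: power_mult mult.commute)
qed


lemma noPM_cover:
  assumes V: "finite V" "V \<noteq> {}"
    and hyp: "\<forall>i\<in>{1..n}. A i \<in> indep_sets V E"
    and R: "R \<in> set_pmf (Pi_pmf {1..n} [] (\<lambda>i. bidc_run V E (A i) n))"
    and HS: "\<forall>X\<in>indep_sets V E. X \<notin> H \<longrightarrow> e \<subseteq> X"
    and noPM: "\<not> has_H_PM H n (\<lambda>i j. R i ! (j - 1))"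
  shows "R \<in> (\<Union>c\<in>{1..n}. \<Union>K\<in>{K. K \<subseteq> {1..n} \<and> card K = c}.
              \<Union>T\<in>{T. T \<subseteq> {1..n} \<and> card T = n+1-c}. {R. \<forall>i\<in>T. \<forall>j\<in>K. e \<subseteq> R i ! (j - 1)})"
proof -
  define M where "M = (\<lambda>i j. R i ! (j - 1))"
  have rows: "length (R i) = n \<and> set (R i) \<subseteq> indep_sets V E" if "i \<in> {1..n}" for i
  proof -
    have "R i \<in> set_pmf (bidc_run V E (A i) n)"
      using R that by (simp add: set_Pi_pmf PiE_dflt_def)
    then show ?thesis by (rule run_set[OF V bspec[OF hyp that]])
  qed
  have MS: "M i j \<in> indep_sets V E" if "i \<in> {1..n}" "j \<in> {1..n}" for i j
  proof -
    have "j - 1 < length (R i)" using rows[OF that(1)] that(2) by auto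
    then show ?thesis unfolding M_def using rows[OF that(1)] nth_mem by auto
  qed
  define Aj where "Aj = (\<lambda>j. {i\<in>{1..n}. M i j \<in> H})"
  have "\<not> (\<forall>K\<subseteq>{1..n}. card K \<le> card (\<Union>(Aj ` K)))"
  proof
    assume hall_c: "\<forall>K\<subseteq>{1..n}. card K \<le> card (\<Union>(Aj ` K))"
    have fin: "\<forall>i\<in>{1..n}. finite (Aj i)" by (auto simp: Aj_def)
    obtain f where f: "inj_on f {1..n}" "\<forall>j\<in>{1..n}. f j \<in> Aj j"
      using hall[OF finite_atLeastAtMost fin hall_c] by blast
    have img: "f ` {1..n} \<subseteq> {1..n}" using f(2) by (auto simp: Aj_def)
    have "bij_betw f {1..n} {1..n}"
      unfolding bij_betw_def using f(1) endo_inj_surj[OF _ img f(1)] by simp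
    then have "has_H_PM H n M" unfolding has_H_PM_def using f(2) by (auto simp: Aj_def)
    then show False using noPM M_def by simp
  qed
  then obtain K where K: "K \<subseteq> {1..n}" "card (\<Union>(Aj ` K)) < card K" by (auto simp: not_le)
  define U where "U = \<Union>(Aj ` K)"
  have Usub: "U \<subseteq> {1..n}" by (auto simp: U_def Aj_def)
  have cK: "1 \<le> card K" "card K \<le> n" using K card_mono[OF _ K(1)] by auto
  have "card ({1..n} - U) = n - card U" using Usub by (simp add: card_Diff_subset finite_subset)
  moreover have "card U < card K" using K(2) by (simp add: U_def)
  ultimately have "n + 1 - card K \<le> card ({1..n} - U)" by linarith
  then obtain T where T: "T \<subseteq> {1..n} - U" "card T = n + 1 - card K"
    by (rule obtain_subset_with_card_n)
  have bad: "\<forall>i\<in>T. \<forall>j\<in>K. e \<subseteq> R i ! (j - 1)"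
  proof (intro ballI)
    fix i j assume i: "i \<in> T" and j: "j \<in> K"
    have ij: "i \<in> {1..n}" "j \<in> {1..n}" using i j T K by auto
    have "i \<notin> Aj j" using i j T U_def by auto
    then have "M i j \<notin> H" using ij by (auto simp: Aj_def)
    then have "e \<subseteq> M i j" by (rule mp[OF bspec[OF HS MS[OF ij]]])
    then show "e \<subseteq> R i ! (j - 1)" by (simp add: M_def)
  qed
  have T1: "T \<subseteq> {1..n}" using T by auto
  show ?thesis
    apply (rule UN_I[of "card K"]) using cK apply simp
    apply (rule UN_I[of K]) using K(1) apply simp
    apply (rule UN_I[of T]) using T1 T(2) apply simp
    using bad by simp
qed


lemma UN_prob_le:
  assumes "finite I" "\<And>i. i \<in> I \<Longrightarrow> measure_pmf.prob P (F i) \<le> b i"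
  shows "measure_pmf.prob P (\<Union>i\<in>I. F i) \<le> (\<Sum>i\<in>I. b i)"
proof -
  have "measure_pmf.prob P (\<Union>i\<in>I. F i) \<le> (\<Sum>i\<in>I. measure_pmf.prob P (F i))"
    by (rule measure_pmf.finite_measure_subadditive_finite) (use assms(1) in auto)
  also have "\<dots> \<le> (\<Sum>i\<in>I. b i)" by (rule sum_mono) (rule assms(2))
  finally show ?thesis .
qed

theorem theorem4:
  fixes V :: "'a set" and es :: "'a set list" and N k :: nat
    and init :: "(nat \<Rightarrow> 'a set) pmf"
  assumes "finite V" and "card V = N" and "N \<ge> 21"
    and "\<forall>e\<in>set es. e \<subseteq> V \<and> card e = 2" and "distinct es"
    and "k < length es"
    and "\<forall>A\<in>set_pmf init. \<forall>i\<in>{1..2 * N^2}. A i \<in> indep_sets V (set (take k es))"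
  shows "measure_pmf.prob (bidc_matrix V (set (take k es)) init (2 * N^2))
           {X. \<not> has_H_PM (indep_sets V (set (take (Suc k) es))) (2 * N^2) X}
         \<le> exp (- real N)"
proof -
  define n where "n = 2 * N^2"
  define E where "E = set (take k es)"
  define e where "e = es ! k"
  define H where "H = indep_sets V (set (take (Suc k) es))"
  define q :: real where "q = 1 - 2 / real N"
  have ein: "e \<in> set es" using assms(6) unfolding e_def by simp
  have e: "e \<subseteq> V" "card e = 2" using assms(4) ein by auto
  have setH: "set (take (Suc k) es) = insert e E"
    using assms(6) by (simp add: take_Suc_conv_app_nth e_def E_def)
  have HS: "\<forall>X\<in>indep_sets V E. X \<notin> H \<longrightarrow> e \<subseteq> X"
    by (auto simp: H_def setH indep_sets_def)
  have V3: "card V \<ge> 3" using assms(2,3) by simp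
  have Vne: "V \<noteq> {}" using V3 by auto
  define Ev where "Ev = (\<lambda>T K. {R :: nat \<Rightarrow> 'a set list. \<forall>i\<in>T. \<forall>j\<in>K. e \<subseteq> R i ! (j - 1)})"
  define Kc where "Kc = (\<lambda>c. {K. K \<subseteq> {1..n} \<and> card K = c})"
  define Tc where "Tc = (\<lambda>c. {T. T \<subseteq> {1..n} \<and> card T = n + 1 - c})"
  have inner: "measure_pmf.prob (map_pmf (\<lambda>R i j. R i ! (j - 1)) (Pi_pmf {1..n} [] (\<lambda>i. bidc_run V E (A i) n)))
        {X. \<not> has_H_PM H n X} \<le> exp (- real N)"
    if hypA: "\<forall>i\<in>{1..n}. A i \<in> indep_sets V E" for A
  proof -
    define P where "P = Pi_pmf {1..n} [] (\<lambda>i. bidc_run V E (A i) n)"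
    define g where "g = (\<lambda>(R :: nat \<Rightarrow> 'a set list) i j. R i ! (j - 1))"
    have cover: "g -` {X. \<not> has_H_PM H n X} \<inter> set_pmf P \<subseteq> (\<Union>c\<in>{1..n}. \<Union>K\<in>Kc c. \<Union>T\<in>Tc c. Ev T K)"
    proof
      fix R assume R: "R \<in> g -` {X. \<not> has_H_PM H n X} \<inter> set_pmf P"
      show "R \<in> (\<Union>c\<in>{1..n}. \<Union>K\<in>Kc c. \<Union>T\<in>Tc c. Ev T K)"
        unfolding Kc_def Tc_def Ev_def
        by (rule noPM_cover[OF assms(1) Vne hypA _ HS]) (use R in \<open>auto simp: P_def g_def\<close>)
    qed
    have "measure_pmf.prob (map_pmf g P) {X. \<not> has_H_PM H n X}
        = measure_pmf.prob P (g -` {X. \<not> has_H_PM H n X} \<inter> set_pmf P)"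
      by (simp add: measure_Int_set_pmf)
    also have "\<dots> \<le> measure_pmf.prob P (\<Union>c\<in>{1..n}. \<Union>K\<in>Kc c. \<Union>T\<in>Tc c. Ev T K)"
      by (rule measure_pmf.finite_measure_mono[OF cover]) simp
    also have "\<dots> \<le> (\<Sum>c\<in>{1..n}. \<Sum>K\<in>Kc c. \<Sum>T\<in>Tc c. q ^ ((n + 1 - c) * c))"
    proof (rule UN_prob_le[OF finite_atLeastAtMost])
      fix c assume c: "c \<in> {1..n}"
      have fK: "finite (Kc c)" "finite (Tc c)" by (auto simp: Kc_def Tc_def)
      show "measure_pmf.prob P (\<Union>K\<in>Kc c. \<Union>T\<in>Tc c. Ev T K) \<le> (\<Sum>K\<in>Kc c. \<Sum>T\<in>Tc c. q ^ ((n + 1 - c) * c))"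
      proof (rule UN_prob_le[OF fK(1)])
        fix K assume K: "K \<in> Kc c"
        show "measure_pmf.prob P (\<Union>T\<in>Tc c. Ev T K) \<le> (\<Sum>T\<in>Tc c. q ^ ((n + 1 - c) * c))"
        proof (rule UN_prob_le[OF fK(2)])
          fix T assume T: "T \<in> Tc c"
          have "measure_pmf.prob P (Ev T K) \<le> (1 - 2 / card V) ^ (card T * card K)"
            unfolding P_def Ev_def
            by (rule Ev_bound[OF assms(1) V3 e]) (use T K in \<open>auto simp: Kc_def Tc_def\<close>)
          also have "\<dots> = q ^ ((n + 1 - c) * c)"
            using T K by (simp add: Kc_def Tc_def q_def assms(2))
          finally show "measure_pmf.prob P (Ev T K) \<le> q ^ ((n + 1 - c) * c)" .
        qed
      qed
    qed
    also have "\<dots> = (\<Sum>c\<in>{1..n}. real (n choose c) * real (n choose (n+1-c)) * q ^ ((n + 1 - c) * c))"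
    proof (rule sum.cong[OF refl])
      fix c
      have "card (Kc c) = n choose c" unfolding Kc_def using n_subsets[of "{1..n}" c] by simp
      moreover have "card (Tc c) = n choose (n+1-c)" unfolding Tc_def using n_subsets[of "{1..n}" "n+1-c"] by simp
      ultimately show "(\<Sum>K\<in>Kc c. \<Sum>T\<in>Tc c. q ^ ((n + 1 - c) * c)) = real (n choose c) * real (n choose (n+1-c)) * q ^ ((n + 1 - c) * c)"
        by simp
    qed
    also have "\<dots> \<le> exp (- real N)" unfolding q_def by (rule sum_bound[OF assms(3) n_def])
    finally show ?thesis unfolding P_def g_def by simp
  qed
  show ?thesis
    unfolding bidc_matrix_def n_def[symmetric] E_def[symmetric] H_def[symmetric]
  proof (rule prob_bind_le)
    fix A assume "A \<in> set_pmf init"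
    then have "\<forall>i\<in>{1..n}. A i \<in> indep_sets V E" using assms(7) by (simp add: n_def E_def)
    then show "measure_pmf.prob (map_pmf (\<lambda>R i j. R i ! (j - 1)) (Pi_pmf {1..n} [] (\<lambda>i. bidc_run V E (A i) n)))
        {X. \<not> has_H_PM H n X} \<le> exp (- real N)" by (rule inner)
  qed simp
qed


end
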